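(* Let $h:(\mathbb R^2,0)\to(\mathbb R,0)$ be a $C^\infty$ function germ with $h=0$ on $\{(x,y):x\ge0\text{ and }y\le0\}$. Then there exists a $C^\infty$ function germ $\tilde h:(\mathbb R^2,0)\to(\mathbb R,0)$ such that $\tilde h=h$ on $\{x\ge0\}$ and $\tilde h=0$ on $\{y\le0\}$.
   Context: Equalities of germs on subsets are meant on the intersection of the subset with some neighbourhood of $0$. *)

theory Defs
  imports "HOL-Analysis.Analysis"
begin

text \<open>C-infinity functions on an (open) subset of the plane, via the standard
coordinate characterisation: all iterated partial derivatives exist and are
continuous.\<close>

definition smooth_on :: "(real \<times> real) set \<Rightarrow> (real \<times> real \<Rightarrow> real) \<Rightarrow> bool" where
  "smooth_on U f \<longleftrightarrow>
     (\<exists>D :: nat \<Rightarrow> nat \<Rightarrow> (real \<times> real \<Rightarrow> real).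
        (\<forall>p\<in>U. D 0 0 p = f p) \<and>
        (\<forall>i j. continuous_on U (D i j)) \<and>
        (\<forall>i j x y. (x, y) \<in> U \<longrightarrow>
            ((\<lambda>t. D i j (t, y)) has_real_derivative D (Suc i) j (x, y)) (at x) \<and>
            ((\<lambda>t. D i j (x, t)) has_real_derivative D i (Suc j) (x, y)) (at y)))"

end

theory Submission
  imports Defs "HOL-Computational_Algebra.Polynomial"
begin


coinductive smooth1 :: "(real \<Rightarrow> real) \<Rightarrow> bool" where
  "(\<And>t. (f has_real_derivative f' t) (at t)) \<Longrightarrow> smooth1 f' \<Longrightarrow> smooth1 f"

inductive_set alg :: "(real \<Rightarrow> real) set \<Rightarrow> (real \<Rightarrow> real) set" for S where
  alg_base: "f \<in> S \<Longrightarrow> f \<in> alg S"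
| alg_const: "(\<lambda>t. c) \<in> alg S"
| alg_add: "f \<in> alg S \<Longrightarrow> g \<in> alg S \<Longrightarrow> (\<lambda>t. f t + g t) \<in> alg S"
| alg_mult: "f \<in> alg S \<Longrightarrow> g \<in> alg S \<Longrightarrow> (\<lambda>t. f t * g t) \<in> alg S"

lemma alg_deriv:
  assumes S: "\<And>f. f \<in> S \<Longrightarrow> \<exists>f'\<in>alg S. \<forall>t. (f has_real_derivative f' t) (at t)"
  and "f \<in> alg S"
  shows "\<exists>f'\<in>alg S. \<forall>t. (f has_real_derivative f' t) (at t)"
  using assms(2)
proof induction
  case (alg_base f) then show ?case using S by blast
next
  case (alg_const c) then show ?case
    by (intro bexI[of _ "\<lambda>t. 0"] alg.alg_const) auto
next
  case (alg_add f g)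
  then obtain f' g' where "f'\<in>alg S" "g'\<in>alg S" "\<forall>t. (f has_real_derivative f' t) (at t)"
    "\<forall>t. (g has_real_derivative g' t) (at t)" by blast
  then show ?case
    by (intro bexI[of _ "\<lambda>t. f' t + g' t"] alg.alg_add allI) (auto intro!: derivative_eq_intros)
next
  case (alg_mult f g)
  then obtain f' g' where "f'\<in>alg S" "g'\<in>alg S" "\<forall>t. (f has_real_derivative f' t) (at t)"
    "\<forall>t. (g has_real_derivative g' t) (at t)" by blast
  then show ?case using alg_mult
    by (intro bexI[of _ "\<lambda>t. f' t * g t + f t * g' t"] alg.alg_add alg.alg_mult allI) (auto intro!: derivative_eq_intros)
qed

lemma alg_smooth:
  assumes S: "\<And>f. f \<in> S \<Longrightarrow> \<exists>f'\<in>alg S. \<forall>t. (f has_real_derivative f' t) (at t)"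
  and "f \<in> alg S"
  shows "smooth1 f"
  using assms(2)
proof (coinduction arbitrary: f)
  case (smooth1 f)
  then show ?case using alg_deriv[OF S smooth1] by blast
qed

lemma smooth1_alg:
  assumes "\<And>f. f \<in> S \<Longrightarrow> smooth1 f \<or> (\<exists>f'\<in>alg (Collect smooth1 \<union> S). \<forall>t. (f has_real_derivative f' t) (at t))"
  and "f \<in> alg (Collect smooth1 \<union> S)"
  shows "smooth1 f"
proof (rule alg_smooth[OF _ assms(2)])
  fix g assume "g \<in> Collect smooth1 \<union> S"
  show "\<exists>f'\<in>alg (Collect smooth1 \<union> S). \<forall>t. (g has_real_derivative f' t) (at t)"
  proof (cases "smooth1 g")
    case True
    then obtain g' where "\<forall>t. (g has_real_derivative g' t) (at t)" "smooth1 g'"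
      by (cases rule: smooth1.cases) auto
    then show ?thesis by (intro bexI[of _ g'] alg.alg_base) auto
  next
    case False
    then have "g \<in> S" using \<open>g \<in> _\<close> by auto
    then show ?thesis using assms(1) False by blast
  qed
qed

lemma smooth1_add: "smooth1 f \<Longrightarrow> smooth1 g \<Longrightarrow> smooth1 (\<lambda>t. f t + g t)"
  apply (rule smooth1_alg[where S="{}"]) apply simp by (intro alg.alg_add alg.alg_base; simp)

lemma smooth1_mult: "smooth1 f \<Longrightarrow> smooth1 g \<Longrightarrow> smooth1 (\<lambda>t. f t * g t)"
  apply (rule smooth1_alg[where S="{}"]) apply simp by (intro alg.alg_mult alg.alg_base; simp)

lemma smooth1_inverse:
  assumes g: "smooth1 g" and pos: "\<And>t. g t \<noteq> 0"
  shows "smooth1 (\<lambda>t. 1 / g t)"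
proof (rule smooth1_alg[where S="{\<lambda>t. 1 / g t}"])
  fix f assume "f \<in> {\<lambda>t. 1 / g t}"
  then have f: "f = (\<lambda>t. 1 / g t)" by simp
  obtain g' where g': "\<forall>t. (g has_real_derivative g' t) (at t)" "smooth1 g'"
    using g by (cases rule: smooth1.cases) auto
  let ?S = "Collect smooth1 \<union> {\<lambda>t. 1 / g t}"
  have "(\<lambda>t. (-1) * g' t * (1 / g t) * (1 / g t)) \<in> alg ?S"
    using g' by (intro alg.alg_mult alg.alg_const alg.alg_base) auto
  moreover have "\<forall>t. (f has_real_derivative (-1) * g' t * (1 / g t) * (1 / g t)) (at t)"
    using g' pos unfolding f
    by (auto intro!: derivative_eq_intros simp: power2_eq_square field_simps)
  ultimately show "smooth1 f \<or> (\<exists>f'\<in>alg ?S. \<forall>t. (f has_real_derivative f' t) (at t))"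
    by (intro disjI2 bexI[of _ "\<lambda>t. (-1) * g' t * (1 / g t) * (1 / g t)"]) auto
qed (auto intro: alg.alg_base)

lemma smooth1_affine:
  assumes "smooth1 f" shows "smooth1 (\<lambda>t. f (a * t + b))"
proof -
  have H: "smooth1 g" if "\<exists>f c. smooth1 f \<and> g = (\<lambda>t. c * f (a * t + b))" for g
    using that
  proof (coinduction arbitrary: g)
    case (smooth1 g)
    then obtain f0 c where f0: "smooth1 f0" "g = (\<lambda>t. c * f0 (a * t + b))" by blast
    obtain f' where f': "\<forall>t. (f0 has_real_derivative f' t) (at t)" "smooth1 f'"
      using f0(1) by (cases rule: smooth1.cases) auto
    have d: "(g has_real_derivative (c * a) * f' (a * t + b)) (at t)" for t
    proof -
      have "((\<lambda>t. a * t + b) has_real_derivative a) (at t)" by (auto intro!: derivative_eq_intros)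
      from DERIV_chain2[OF f'(1)[rule_format] this]
      have "((\<lambda>t. f0 (a * t + b)) has_real_derivative f' (a * t + b) * a) (at t)" .
      from DERIV_cmult[OF this, of c] show ?thesis unfolding f0(2) by (simp add: algebra_simps)
    qed
    let ?g' = "\<lambda>t. (c * a) * f' (a * t + b)"
    have "\<exists>f c'. smooth1 f \<and> (\<lambda>t. (c * a) * f' (a * t + b)) = (\<lambda>t. c' * f (a * t + b))"
      using f'(2) by blast
    then have B: "\<exists>f c. smooth1 f \<and> ?g' = (\<lambda>t. c * f (a * t + b))" by simp
    have A: "\<forall>x. (g has_real_derivative ?g' x) (at x)" using d by simp
    show ?case
      apply (rule exI[where x=g], rule exI[where x="?g'"])
      apply (intro conjI refl disjI1)
      using A apply assumption
      using B by blast
  qed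
  have "\<exists>f0 c. smooth1 f0 \<and> (\<lambda>t. f (a*t+b)) = (\<lambda>t. c * f0 (a*t+b))"
    using assms by (intro exI[of _ f] exI[of _ 1]) simp
  then show ?thesis by (rule H)
qed


definition fp :: "real poly \<Rightarrow> real \<Rightarrow> real" where
  "fp p t = (if t > 0 then poly p (1 / t) * exp (- (1 / t)) else 0)"

lemma poly_exp_at_top: "((\<lambda>u. poly p u * exp (- u)) \<longlongrightarrow> (0::real)) at_top"
proof -
  have eq: "poly p u * exp (- u) = (\<Sum>i\<le>degree p. coeff p i * (u ^ i / exp u))" for u
  proof -
    have "poly p u * exp (- u) = (\<Sum>i\<le>degree p. coeff p i * u ^ i) / exp u"
      by (simp add: poly_altdef exp_minus divide_inverse)
    also have "\<dots> = (\<Sum>i\<le>degree p. coeff p i * (u ^ i / exp u))"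
      by (simp add: sum_divide_distrib)
    finally show ?thesis .
  qed
  have "((\<lambda>u. \<Sum>i\<le>degree p. coeff p i * (u ^ i / exp u)) \<longlongrightarrow> (0::real)) at_top"
  proof (rule tendsto_null_sum)
    fix i
    have "((\<lambda>u. coeff p i * (u ^ i / exp u)) \<longlongrightarrow> coeff p i * 0) at_top"
      by (intro tendsto_mult tendsto_const tendsto_power_div_exp_0)
    then show "((\<lambda>u. coeff p i * (u ^ i / exp u)) \<longlongrightarrow> 0) at_top" by simp
  qed
  then show ?thesis unfolding eq .
qed

lemma poly_exp_at_right: "((\<lambda>h. poly p (1 / h) * exp (- (1 / h))) \<longlongrightarrow> (0::real)) (at_right 0)"
proof -
  have "((\<lambda>h. poly p (inverse h) * exp (- (inverse h))) \<longlongrightarrow> (0::real)) (at_right 0)"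
    by (rule filterlim_compose[OF poly_exp_at_top filterlim_inverse_at_top_right])
  then show ?thesis by (simp add: inverse_eq_divide)
qed

lemma fp_deriv: "(fp p has_real_derivative fp ([:0, 0, 1:] * (p - pderiv p)) t) (at t)"
proof -
  let ?q = "[:0, 0, 1:] * (p - pderiv p)"
  consider "t > 0" | "t < 0" | "t = 0" by linarith
  then show ?thesis
  proof cases
    case 1
    have d: "((\<lambda>t. poly p (1 / t) * exp (- (1 / t))) has_real_derivative
        poly (pderiv p) (1 / t) * (- 1 / t^2) * exp (- (1 / t)) + poly p (1 / t) * (exp (- (1 / t)) * (1 / t^2))) (at t)"
      using 1
      by (auto intro!: derivative_eq_intros DERIV_chain2[OF poly_DERIV] simp: power2_eq_square field_simps)
    have eqq: "fp ?q t = poly (pderiv p) (1 / t) * (- 1 / t^2) * exp (- (1 / t)) + poly p (1 / t) * (exp (- (1 / t)) * (1 / t^2))"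
      using 1 by (simp add: fp_def algebra_simps power2_eq_square divide_simps)
    show ?thesis using 1
      by (intro has_field_derivative_transform_within_open[OF d[folded eqq], of "{0<..}"]) (auto simp: fp_def)
  next
    case 2
    have eq0: "fp ?q t = 0" using 2 by (simp add: fp_def)
    show ?thesis unfolding eq0 using 2
      by (intro has_field_derivative_transform_within_open[OF DERIV_const[of 0], of "{..<0}"]) (auto simp: fp_def)
  next
    case 3
    have q0: "fp ?q 0 = 0" by (simp add: fp_def)
    have "((\<lambda>h. fp p h / h) \<longlongrightarrow> 0) (at_left 0)"
    proof (rule Lim_transform_eventually[OF tendsto_const])
      show "\<forall>\<^sub>F h in at_left 0. 0 = fp p h / h"
        by (auto simp: eventually_at_left_field fp_def intro!: exI[of _ "-1"])
    qed
    moreover have "((\<lambda>h. fp p h / h) \<longlongrightarrow> 0) (at_right 0)"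
    proof (rule Lim_transform_eventually[OF poly_exp_at_right[of "pCons 0 p"]])
      show "\<forall>\<^sub>F h in at_right 0. poly (pCons 0 p) (1 / h) * exp (- (1 / h)) = fp p h / h"
        by (auto simp: eventually_at_right_field fp_def intro!: exI[of _ 1])
    qed
    ultimately have "((\<lambda>h. fp p h / h) \<longlongrightarrow> 0) (at 0)" by (rule filterlim_split_at)
    then show ?thesis unfolding 3 DERIV_def q0 by (simp add: fp_def)
  qed
qed

lemma smooth1_fp: "smooth1 (fp p)"
proof (rule alg_smooth[where S="range fp"])
  fix f assume "f \<in> range fp"
  then obtain p where "f = fp p" by auto
  then show "\<exists>f'\<in>alg (range fp). \<forall>t. (f has_real_derivative f' t) (at t)"
    using fp_deriv by (intro bexI[of _ "fp ([:0, 0, 1:] * (p - pderiv p))"] alg.alg_base) auto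
qed (auto intro: alg.alg_base)

definition phi :: "real \<Rightarrow> real" where "phi = fp 1"

lemma phi_pos: "t > 0 \<Longrightarrow> phi t > 0" and phi_zero: "t \<le> 0 \<Longrightarrow> phi t = 0"
  by (auto simp: phi_def fp_def)

definition Bs :: "real \<Rightarrow> real" where
  "Bs t = phi (1 * t + (- 1/2)) * (1 / (phi (1 * t + (-1/2)) + phi ((-1) * t + 2)))"

lemma smooth1_Bs: "smooth1 Bs"
proof -
  have a: "smooth1 (\<lambda>t. phi (1 * t + (- 1/2)))" "smooth1 (\<lambda>t. phi ((-1) * t + 2))"
    using smooth1_affine[OF smooth1_fp[of 1], of 1 "-1/2"] smooth1_affine[OF smooth1_fp[of 1], of "-1" 2]
    by (simp_all add: phi_def)
  have nz: "phi (1 * t + (- 1/2)) + phi ((-1) * t + 2) \<noteq> 0" for t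
  proof -
    have "phi (1 * t + (- 1/2)) \<ge> 0" "phi ((-1) * t + 2) \<ge> 0"
      by (auto simp: phi_def fp_def)
    moreover have "phi (1 * t + (- 1/2)) > 0 \<or> phi ((-1) * t + 2) > 0"
      by (cases "t > 1/2") (auto intro!: phi_pos)
    ultimately show ?thesis by linarith
  qed
  show ?thesis unfolding Bs_def
    by (intro smooth1_mult smooth1_inverse smooth1_add a nz)
qed

lemma Bs_low: "t \<le> 1/2 \<Longrightarrow> Bs t = 0"
  by (simp add: Bs_def phi_zero)

lemma Bs_high: "t \<ge> 2 \<Longrightarrow> Bs t = 1"
proof -
  assume "t \<ge> 2"
  then have "phi ((-1) * t + 2) = 0" "phi (1 * t + (- 1/2)) > 0" by (auto intro!: phi_zero phi_pos)
  then show ?thesis by (simp add: Bs_def)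
qed

definition sder :: "(real \<Rightarrow> real) \<Rightarrow> real \<Rightarrow> real" where
  "sder f = (SOME f'. (\<forall>t. (f has_real_derivative f' t) (at t)) \<and> smooth1 f')"

lemma sder: assumes "smooth1 f"
  shows "\<forall>t. (f has_real_derivative sder f t) (at t)" "smooth1 (sder f)"
proof -
  have "\<exists>f'. (\<forall>t. (f has_real_derivative f' t) (at t)) \<and> smooth1 f'"
    using assms by (cases rule: smooth1.cases) auto
  from someI_ex[OF this] show "\<forall>t. (f has_real_derivative sder f t) (at t)" "smooth1 (sder f)"
    unfolding sder_def by auto
qed

definition Bd :: "nat \<Rightarrow> real \<Rightarrow> real" where "Bd k = (sder ^^ k) Bs"

lemma Bd_smooth: "smooth1 (Bd k)"
  by (induction k) (auto simp: Bd_def smooth1_Bs sder)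

lemma Bd_deriv: "(Bd k has_real_derivative Bd (Suc k) t) (at t)"
  using sder(1)[OF Bd_smooth[of k]] by (simp add: Bd_def)

lemma Bd_0: "Bd 0 = Bs" by (simp add: Bd_def)

lemma Bd_low: "t < 1/2 \<Longrightarrow> Bd k t = 0"
proof (induction k arbitrary: t)
  case 0 then show ?case by (simp add: Bd_0 Bs_low)
next
  case (Suc k)
  have "(Bd k has_real_derivative 0) (at t)"
    by (rule has_field_derivative_transform_within_open[OF DERIV_const[of 0], of "{..<1/2}"])
      (use Suc in auto)
  then show ?case using Bd_deriv DERIV_unique by blast
qed

lemma Bd_high: "t > 2 \<Longrightarrow> Bd k t = (if k = 0 then 1 else 0)"
proof (induction k arbitrary: t)
  case 0 then show ?case by (simp add: Bd_0 Bs_high)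
next
  case (Suc k)
  have "(Bd k has_real_derivative 0) (at t)"
    by (rule has_field_derivative_transform_within_open[OF DERIV_const[of "if k = 0 then 1 else 0"], of "{2<..}"])
      (use Suc in auto)
  then show ?case using Bd_deriv DERIV_unique by fastforce
qed

lemma Bd_cont: "isCont (Bd k) t"
  using Bd_deriv by (rule DERIV_isCont)

lemma Bd_bound: "\<exists>M. \<forall>t. \<bar>Bd k t\<bar> \<le> M"
proof -
  have "\<exists>M. \<forall>t. 1/2 \<le> t \<and> t \<le> 2 \<longrightarrow> \<bar>Bd k t\<bar> \<le> M"
    by (rule isCont_bounded) (auto intro!: continuous_intros Bd_cont)
  then obtain M where M: "\<And>t. 1/2 \<le> t \<Longrightarrow> t \<le> 2 \<Longrightarrow> \<bar>Bd k t\<bar> \<le> M" by blast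
  have "\<bar>Bd k t\<bar> \<le> max M 1" for t
  proof -
    consider "t < 1/2" | "t > 2" | "1/2 \<le> t \<and> t \<le> 2" by linarith
    then show ?thesis
    proof cases
      case 3 then show ?thesis using M[of t] by linarith
    qed (auto simp: Bd_low Bd_high)
  qed
  then show ?thesis by blast
qed


lemma ev_x: "open U \<Longrightarrow> (x, y) \<in> U \<Longrightarrow> \<forall>\<^sub>F t in at x within S. (t, y) \<in> U"
proof -
  assume "open U" "(x, y) \<in> U"
  then have "eventually (\<lambda>p. p \<in> U) (nhds (x, y))" by (rule eventually_nhds_in_open)
  moreover have "filterlim (\<lambda>t. (t, y)) (nhds (x, y)) (at x within S)"
    by (intro tendsto_intros tendsto_ident_at)
  ultimately show ?thesis by (rule eventually_compose_filterlim)
qed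

lemma ev_y: "open U \<Longrightarrow> (x, y) \<in> U \<Longrightarrow> \<forall>\<^sub>F t in at y within S. (x, t) \<in> U"
proof -
  assume "open U" "(x, y) \<in> U"
  then have "eventually (\<lambda>p. p \<in> U) (nhds (x, y))" by (rule eventually_nhds_in_open)
  moreover have "filterlim (\<lambda>t. (x, t)) (nhds (x, y)) (at y within S)"
    by (intro tendsto_intros tendsto_ident_at)
  ultimately show ?thesis by (rule eventually_compose_filterlim)
qed

lemma deriv_zero_ev:
  assumes "(f has_real_derivative L) (at x)" "eventually (\<lambda>t. f t = 0) (at x within S)"
    "f x = 0" "at x within S \<noteq> bot"
  shows "L = 0"
proof -
  have "((\<lambda>y. (f y - f x) / (y - x)) \<longlongrightarrow> L) (at x within S)"
    using has_field_derivative_at_within[OF assms(1)] by (simp add: has_field_derivative_iff)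
  moreover have "((\<lambda>y. (f y - f x) / (y - x)) \<longlongrightarrow> 0) (at x within S)"
    by (rule Lim_transform_eventually[OF tendsto_const]) (use assms(2,3) in \<open>auto elim: eventually_mono\<close>)
  ultimately show ?thesis using assms(4) tendsto_unique by blast
qed

lemma mvt_bound:
  fixes f f' :: "real \<Rightarrow> real"
  assumes "a \<le> b" "\<And>t. a \<le> t \<Longrightarrow> t \<le> b \<Longrightarrow> (f has_real_derivative f' t) (at t)"
    "\<And>t. a \<le> t \<Longrightarrow> t \<le> b \<Longrightarrow> \<bar>f' t\<bar> \<le> M"
  shows "\<bar>f b - f a\<bar> \<le> (b - a) * M"
proof (cases "a = b")
  case False
  then have "a < b" using assms(1) by simp
  from MVT2[OF this assms(2)] obtain z where z: "a < z" "z < b" "f b - f a = (b - a) * f' z" by blast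
  have "\<bar>f b - f a\<bar> = (b - a) * \<bar>f' z\<bar>" using z \<open>a < b\<close> by (simp add: abs_mult)
  also have "\<dots> \<le> (b - a) * M" using assms(3)[of z] z \<open>a < b\<close> by (intro mult_left_mono) auto
  finally show ?thesis .
qed simp

definition dd :: "real \<times> real \<Rightarrow> real" where
  "dd p = max (- fst p) 0 + max (snd p) 0"

lemma dd_nonneg: "dd p \<ge> 0" by (simp add: dd_def)

locale flatctx =
  fixes U :: "(real \<times> real) set" and h :: "real \<times> real \<Rightarrow> real"
    and D :: "nat \<Rightarrow> nat \<Rightarrow> real \<times> real \<Rightarrow> real"
  assumes U_open: "open U"
    and D00: "\<forall>p\<in>U. D 0 0 p = h p"
    and Dcont: "\<forall>i j. continuous_on U (D i j)"
    and Dxy: "\<forall>i j x y. (x, y) \<in> U \<longrightarrow>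
            ((\<lambda>t. D i j (t, y)) has_real_derivative D (Suc i) j (x, y)) (at x) \<and>
            ((\<lambda>t. D i j (x, t)) has_real_derivative D i (Suc j) (x, y)) (at y)"
    and hQ: "\<forall>x y. (x, y) \<in> U \<longrightarrow> x \<ge> 0 \<longrightarrow> y \<le> 0 \<longrightarrow> h (x, y) = 0"
begin

lemma Dx: "(x, y) \<in> U \<Longrightarrow> ((\<lambda>t. D i j (t, y)) has_real_derivative D (Suc i) j (x, y)) (at x)"
  using Dxy by blast

lemma Dy: "(x, y) \<in> U \<Longrightarrow> ((\<lambda>t. D i j (x, t)) has_real_derivative D i (Suc j) (x, y)) (at y)"
  using Dxy by blast

lemma zeroQ: "(x, y) \<in> U \<Longrightarrow> x \<ge> 0 \<Longrightarrow> y \<le> 0 \<Longrightarrow> D i j (x, y) = 0"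
proof (induction i arbitrary: j x y)
  case 0
  then show ?case
  proof (induction j arbitrary: y)
    case 0 then show ?case using D00 hQ by auto
  next
    case (Suc j)
    show ?case
    proof (rule deriv_zero_ev[OF Dy[OF Suc.prems(1)]])
      have "\<forall>\<^sub>F t in at y within {..<y}. (x, t) \<in> U \<and> t < y"
        using ev_y[OF U_open Suc.prems(1), of "{..<y}"]
        by (auto simp: eventually_at_filter elim!: eventually_mono)
      then show "\<forall>\<^sub>F t in at y within {..<y}. D 0 j (x, t) = 0"
        by (rule eventually_mono) (use Suc.prems in \<open>auto intro!: Suc.IH\<close>)
      show "D 0 j (x, y) = 0" using Suc by blast
      show "at y within {..<y} \<noteq> bot" by simp
    qed
  qed
next
  case (Suc i)
  show ?case
  proof (rule deriv_zero_ev[OF Dx[OF Suc.prems(1)]])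
    have "\<forall>\<^sub>F t in at x within {x<..}. (t, y) \<in> U \<and> x < t"
      using ev_x[OF U_open Suc.prems(1), of "{x<..}"]
      by (auto simp: eventually_at_filter elim!: eventually_mono)
    then show "\<forall>\<^sub>F t in at x within {x<..}. D i j (t, y) = 0"
      by (rule eventually_mono) (use Suc.prems in \<open>auto intro!: Suc.IH\<close>)
    show "D i j (x, y) = 0" using Suc by blast
    show "at x within {x<..} \<noteq> bot" by simp
  qed
qed

lemma flat:
  assumes K: "{-r..r} \<times> {-r..r} \<subseteq> U"
  shows "\<exists>C\<ge>0. \<forall>q\<in>{-r..r} \<times> {-r..r}. \<bar>D i j q\<bar> \<le> C * dd q ^ N"
proof (induction N arbitrary: i j)
  case 0
  have "compact (D i j ` ({-r..r} \<times> {-r..r}))"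
    by (intro compact_continuous_image compact_Times compact_Icc continuous_on_subset[OF _ K])
      (use Dcont in auto)
  then obtain a where "\<forall>z\<in>D i j ` ({-r..r} \<times> {-r..r}). norm z \<le> a"
    using compact_imp_bounded bounded_iff by metis
  then show ?case by (intro exI[of _ "max a 0"]) force
next
  case (Suc N)
  obtain C1 where C1: "C1 \<ge> 0" "\<forall>q\<in>{-r..r} \<times> {-r..r}. \<bar>D (Suc i) j q\<bar> \<le> C1 * dd q ^ N"
    using Suc.IH by blast
  obtain C2 where C2: "C2 \<ge> 0" "\<forall>q\<in>{-r..r} \<times> {-r..r}. \<bar>D i (Suc j) q\<bar> \<le> C2 * dd q ^ N"
    using Suc.IH by blast
  have "\<bar>D i j (x, y)\<bar> \<le> (C1 + C2) * dd (x, y) ^ Suc N" if q: "(x, y) \<in> {-r..r} \<times> {-r..r}" for x y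
  proof -
    let ?P = "dd (x, y) ^ N"
    let ?x = "max x 0"
    have h1: "\<bar>D i j (?x, y) - D i j (x, y)\<bar> \<le> (?x - x) * (C1 * ?P)"
    proof (rule mvt_bound)
      fix t assume t: "x \<le> t" "t \<le> ?x"
      then have tK: "(t, y) \<in> {-r..r} \<times> {-r..r}" using q by auto
      then show "((\<lambda>t. D i j (t, y)) has_real_derivative D (Suc i) j (t, y)) (at t)"
        using K by (intro Dx) auto
      have "dd (t, y) \<le> dd (x, y)" using t by (auto simp: dd_def)
      then have "dd (t, y) ^ N \<le> ?P" by (intro power_mono dd_nonneg)
      then show "\<bar>D (Suc i) j (t, y)\<bar> \<le> C1 * ?P"
        using C1 tK by (meson mult_left_mono order_trans)
    qed simp
    let ?y = "min y 0"
    have h2: "\<bar>D i j (?x, y) - D i j (?x, ?y)\<bar> \<le> (y - ?y) * (C2 * ?P)"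
    proof (rule mvt_bound[where f="\<lambda>t. D i j (?x, t)"])
      fix t assume t: "?y \<le> t" "t \<le> y"
      then have tK: "(?x, t) \<in> {-r..r} \<times> {-r..r}" using q by auto
      then show "((\<lambda>t. D i j (?x, t)) has_real_derivative D i (Suc j) (?x, t)) (at t)"
        using K by (intro Dy) auto
      have "dd (?x, t) \<le> dd (x, y)" using t by (auto simp: dd_def)
      then have "dd (?x, t) ^ N \<le> ?P" by (intro power_mono dd_nonneg)
      then show "\<bar>D i (Suc j) (?x, t)\<bar> \<le> C2 * ?P"
        using C2 tK by (meson mult_left_mono order_trans)
    qed simp
    have h3: "D i j (?x, ?y) = 0"
      using q K by (intro zeroQ) auto
    have P0: "?P \<ge> 0" using dd_nonneg by simp
    have a0: "?x - x \<ge> 0" "y - ?y \<ge> 0" by auto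
    have dd_eq: "dd (x, y) = (?x - x) + (y - ?y)" by (auto simp: dd_def)
    have "\<bar>D i j (x, y)\<bar> \<le> (?x - x) * (C1 * ?P) + (y - ?y) * (C2 * ?P)"
      using h1 h2 h3 by linarith
    also have "\<dots> \<le> (C1 + C2) * (((?x - x) + (y - ?y)) * ?P)"
    proof -
      have "0 \<le> (?x - x) * (C2 * ?P)" "0 \<le> (y - ?y) * (C1 * ?P)"
        using a0 C1 C2 P0 by auto
      then show ?thesis by (simp add: algebra_simps)
    qed
    also have "\<dots> = (C1 + C2) * dd (x, y) ^ Suc N" by (simp add: dd_eq)
    finally show ?thesis .
  qed
  then show ?case using C1 C2 by (intro exI[of _ "C1 + C2"]) auto
qed

end


lemma Bd_chain [derivative_intros]:
  "(g has_real_derivative g') (at x within s) \<Longrightarrow>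
   ((\<lambda>t. Bd k (g t)) has_real_derivative Bd (Suc k) (g x) * g') (at x within s)"
  by (rule DERIV_chain'[OF _ Bd_deriv]) 

lemma isCont_Bd [continuous_intros]: "isCont f p \<Longrightarrow> isCont (\<lambda>q. Bd k (f q)) p"
  by (rule isCont_o2[OF _ Bd_cont])

lemma isCont_local: "open S \<Longrightarrow> p \<in> S \<Longrightarrow> (\<And>q. q \<in> S \<Longrightarrow> f q = g q) \<Longrightarrow> isCont g p \<Longrightarrow> isCont f p"
proof -
  assume a: "open S" "p \<in> S" "\<And>q. q \<in> S \<Longrightarrow> f q = g q" "isCont g p"
  have "eventually (\<lambda>q. f q = g q) (nhds p)"
    using eventually_nhds_in_open[OF a(1,2)] by (rule eventually_mono) (use a(3) in auto)
  with isCont_cong[OF this] a(4) show ?thesis by simp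
qed

fun Gf :: "nat \<Rightarrow> nat \<Rightarrow> nat \<Rightarrow> real \<times> real \<Rightarrow> real" where
  "Gf 0 m n p = (if fst p < 0 then Bd 0 (snd p / - fst p) else 1) * snd p ^ m"
| "Gf (Suc k) m n p = (if fst p < 0 then Bd (Suc k) (snd p / - fst p) * snd p ^ m * (1 / - fst p) ^ n else 0)"

definition Gdx :: "nat \<Rightarrow> nat \<Rightarrow> nat \<Rightarrow> real \<times> real \<Rightarrow> real" where
  "Gdx k m n p = (if k = 0 then Gf (Suc 0) (Suc m) (Suc (Suc 0)) p else Gf (Suc k) (Suc m) (Suc (Suc n)) p + real n * Gf k m (Suc n) p)"

definition Gdy :: "nat \<Rightarrow> nat \<Rightarrow> nat \<Rightarrow> real \<times> real \<Rightarrow> real" where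
  "Gdy k m n p = Gf (Suc k) m (if k = 0 then Suc 0 else Suc n) p + real m * Gf k (m - 1) n p"

lemma pow_aux: "x < 0 \<Longrightarrow> real n * (1 / - x) ^ (n - Suc 0) * (1 / x^2) = real n * (1 / - x) ^ Suc n"
  by (cases n) (auto simp: power2_eq_square field_simps)

lemma Gf_dy: "((\<lambda>t. Gf k m n (x, t)) has_real_derivative Gdy k m n (x, y)) (at y)"
proof (cases "x < 0")
  case True
  show ?thesis
  proof (cases k)
    case 0
    have "((\<lambda>t. Bd 0 (t / - x) * t ^ m) has_real_derivative
           Bd (Suc 0) (y / - x) * (1 / - x) * y ^ m + Bd 0 (y / - x) * (real m * y ^ (m - 1))) (at y)"
      using True by (auto intro!: derivative_eq_intros simp: field_simps)
    then show ?thesis using True 0 by (simp add: Gdy_def algebra_simps)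
  next
    case (Suc k')
    have "((\<lambda>t. Bd (Suc k') (t / - x) * t ^ m * (1 / - x) ^ n) has_real_derivative
           (Bd (Suc (Suc k')) (y / - x) * (1 / - x) * y ^ m + Bd (Suc k') (y / - x) * (real m * y ^ (m - 1))) * (1 / - x) ^ n) (at y)"
      using True by (auto intro!: derivative_eq_intros simp: field_simps)
    then show ?thesis using True Suc by (simp add: Gdy_def algebra_simps)
  qed
next
  case False
  show ?thesis
  proof (cases k)
    case 0
    have "((\<lambda>t. t ^ m) has_real_derivative real m * y ^ (m - 1)) (at y)"
      by (auto intro!: derivative_eq_intros)
    then show ?thesis using False 0 by (simp add: Gdy_def)
  next
    case (Suc k')
    then show ?thesis using False by (simp add: Gdy_def)
  qed
qed

lemma Gf_pos: "fst p \<ge> 0 \<Longrightarrow> Gf k m n p = (if k = 0 then snd p ^ m else 0)"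
  by (cases k) auto

lemma Gf_cone: "fst p < 0 \<Longrightarrow> snd p / - fst p > 2 \<Longrightarrow> Gf k m n p = (if k = 0 then snd p ^ m else 0)"
  by (cases k) (auto simp: Bd_high)

lemma cone_aux: "(y::real) > 0 \<Longrightarrow> t < 0 \<Longrightarrow> -t < y / 4 \<Longrightarrow> y / 2 < s \<Longrightarrow> s / - t > 2"
  by (simp add: field_simps)

lemma Gf_dx:
  assumes "\<not> (x = 0 \<and> y \<le> 0)"
  shows "((\<lambda>t. Gf k m n (t, y)) has_real_derivative Gdx k m n (x, y)) (at x)"
proof -
  consider "x < 0" | "x > 0" | "x = 0" "y > 0" using assms by linarith
  then show ?thesis
  proof cases
    case 1
    show ?thesis
    proof (cases k)
      case 0
      have "((\<lambda>t. Bd 0 (y / - t) * y ^ m) has_real_derivative Gdx k m n (x, y)) (at x)"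
        using 1 0 by (auto intro!: derivative_eq_intros simp: Gdx_def power2_eq_square field_simps)
      then show ?thesis
        by (rule has_field_derivative_transform_within_open[of _ _ _ "{..<0}"]) (use 1 0 in auto)
    next
      case (Suc k')
      have "((\<lambda>t. Bd (Suc k') (y / - t) * y ^ m * (1 / - t) ^ n) has_real_derivative
          Bd (Suc (Suc k')) (y / - x) * (y / x^2) * y ^ m * (1 / - x) ^ n +
          Bd (Suc k') (y / - x) * y ^ m * (real n * (1 / - x) ^ (n - Suc 0) * (1 / x^2))) (at x)"
        using 1 by (auto intro!: derivative_eq_intros simp: power2_eq_square field_simps)
      also have "Bd (Suc (Suc k')) (y / - x) * (y / x^2) * y ^ m * (1 / - x) ^ n +
          Bd (Suc k') (y / - x) * y ^ m * (real n * (1 / - x) ^ (n - Suc 0) * (1 / x^2)) = Gdx k m n (x, y)"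
        using 1 Suc by (cases n) (simp_all add: Gdx_def power2_eq_square field_simps)
      finally show ?thesis
        by (rule has_field_derivative_transform_within_open[of _ _ _ "{..<0}"]) (use 1 Suc in auto)
    qed
  next
    case 2
    have z: "Gdx k m n (x, y) = 0" using 2 by (simp add: Gdx_def Gf_pos)
    have eq: "Gf k m n (x, y) = Gf k m n (t, y)" if "t \<in> {0<..}" for t
      using 2 that by (simp add: Gf_pos)
    show ?thesis unfolding z
      by (rule has_field_derivative_transform_within_open[OF DERIV_const[of "Gf k m n (x, y)"], of "{0<..}"])
        (use 2 in simp, use 2 in simp, use eq in blast)
  next
    case 3
    have z: "Gdx k m n (x, y) = 0" using 3 by (simp add: Gdx_def Gf_pos)
    have eq: "Gf k m n (t, y) = Gf k m n (x, y)" if "t \<in> {- y / 4<..}" for t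
    proof (cases "t < 0")
      case True
      have yy: "y / 2 < y" using 3(2) by simp
      have tt: "- t < y / 4" using that by simp
      have "y / - t > 2" by (rule cone_aux[OF 3(2) True tt yy])
      then have a: "Gf k m n (t, y) = (if k = 0 then y ^ m else 0)"
        using Gf_cone[of "(t, y)" k m n] True by (simp only: fst_conv snd_conv)
      have b: "Gf k m n (x, y) = (if k = 0 then y ^ m else 0)"
        using Gf_pos[of "(x, y)" k m n] 3 by (simp only: fst_conv snd_conv order_refl)
      show ?thesis by (simp only: a b)
    qed (use 3 in \<open>auto simp: Gf_pos\<close>)
    show ?thesis unfolding z
      by (rule has_field_derivative_transform_within_open[OF DERIV_const[of "Gf k m n (x, y)"], of "{- y / 4<..}"])
        (simp, use 3 in simp, use eq in \<open>metis\<close>)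
  qed
qed

lemma Gf_cont:
  assumes "\<not> (fst p = 0 \<and> snd p \<le> 0)"
  shows "isCont (Gf k m n) p"
proof -
  consider "fst p < 0" | "fst p > 0" | "fst p = 0" "snd p > 0" using assms by linarith
  then show ?thesis
  proof cases
    case 1
    show ?thesis
    proof (rule isCont_local[of "{q. fst q < 0}"])
      show "open {q :: real \<times> real. fst q < 0}" by (intro open_Collect_less continuous_intros)
      show "isCont (\<lambda>q. if k = 0 then Bd 0 (snd q / - fst q) * snd q ^ m
               else Bd k (snd q / - fst q) * snd q ^ m * (1 / - fst q) ^ n) p"
        using 1 by (cases "k = 0") (auto intro!: continuous_intros)
      fix q :: "real \<times> real" assume "q \<in> {q. fst q < 0}"
      then show "Gf k m n q = (if k = 0 then Bd 0 (snd q / - fst q) * snd q ^ m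
               else Bd k (snd q / - fst q) * snd q ^ m * (1 / - fst q) ^ n)"
        by (cases k) auto
    qed (use 1 in auto)
  next
    case 2
    show ?thesis
    proof (rule isCont_local[of "{q. 0 < fst q}"])
      show "open {q :: real \<times> real. 0 < fst q}" by (intro open_Collect_less continuous_intros)
      show "isCont (\<lambda>q. if k = 0 then snd q ^ m else 0) p"
        by (cases "k = 0") (auto intro!: continuous_intros)
    qed (use 2 in \<open>auto simp: Gf_pos\<close>)
  next
    case 3
    let ?S = "{q. - snd p / 4 < fst q \<and> snd p / 2 < snd q}"
    show ?thesis
    proof (rule isCont_local[of ?S])
      show "open ?S" by (intro open_Collect_conj open_Collect_less continuous_intros)
      show "isCont (\<lambda>q. if k = 0 then snd q ^ m else 0) p"
        by (cases "k = 0") (auto intro!: continuous_intros)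
      fix q assume q: "q \<in> ?S"
      show "Gf k m n q = (if k = 0 then snd q ^ m else 0)"
      proof (cases "fst q < 0")
        case True
        have q1: "- fst q < snd p / 4" and q2: "snd p / 2 < snd q" using q by auto
        have "snd q / - fst q > 2" by (rule cone_aux[OF 3(2) True q1 q2])
        then show ?thesis using Gf_cone[of q k m n] True by (simp only:)
      qed (simp add: Gf_pos)
    qed (use 3 in auto)
  qed
qed


datatype ex = Hx nat nat | Gx nat nat nat | Cx real | Ad ex ex | Mu ex ex

primrec ev :: "(nat \<Rightarrow> nat \<Rightarrow> real \<times> real \<Rightarrow> real) \<Rightarrow> ex \<Rightarrow> real \<times> real \<Rightarrow> real" where
  "ev D (Hx a b) p = D a b p"
| "ev D (Gx k m n) p = Gf k m n p"
| "ev D (Cx c) p = c"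
| "ev D (Ad e1 e2) p = ev D e1 p + ev D e2 p"
| "ev D (Mu e1 e2) p = ev D e1 p * ev D e2 p"

primrec dx :: "ex \<Rightarrow> ex" where
  "dx (Hx a b) = Hx (Suc a) b"
| "dx (Gx k m n) = (if k = 0 then Gx (Suc 0) (Suc m) (Suc (Suc 0))
     else Ad (Gx (Suc k) (Suc m) (Suc (Suc n))) (Mu (Cx (real n)) (Gx k m (Suc n))))"
| "dx (Cx c) = Cx 0"
| "dx (Ad e1 e2) = Ad (dx e1) (dx e2)"
| "dx (Mu e1 e2) = Ad (Mu (dx e1) e2) (Mu e1 (dx e2))"

primrec dy :: "ex \<Rightarrow> ex" where
  "dy (Hx a b) = Hx a (Suc b)"
| "dy (Gx k m n) = Ad (Gx (Suc k) m (if k = 0 then Suc 0 else Suc n)) (Mu (Cx (real m)) (Gx k (m - 1) n))"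
| "dy (Cx c) = Cx 0"
| "dy (Ad e1 e2) = Ad (dy e1) (dy e2)"
| "dy (Mu e1 e2) = Ad (Mu (dy e1) e2) (Mu e1 (dy e2))"

primrec hasH :: "ex \<Rightarrow> bool" where
  "hasH (Hx a b) = True"
| "hasH (Gx k m n) = False"
| "hasH (Cx c) = False"
| "hasH (Ad e1 e2) = (hasH e1 \<and> hasH e2)"
| "hasH (Mu e1 e2) = (hasH e1 \<or> hasH e2)"

lemma hasH_dx: "hasH e \<Longrightarrow> hasH (dx e)"
  by (induction e) auto

lemma hasH_dy: "hasH e \<Longrightarrow> hasH (dy e)"
  by (induction e) auto

lemma ev_dx_Gx: "ev D (dx (Gx k m n)) p = Gdx k m n p"
  by (simp add: Gdx_def)

lemma ev_dy_Gx: "ev D (dy (Gx k m n)) p = Gdy k m n p"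
  by (simp add: Gdy_def)

lemma comm_Gx: "ev D (dx (dy (Gx k m n))) p = ev D (dy (dx (Gx k m n))) p"
  by (cases k; cases m) (simp_all add: algebra_simps del: Gf.simps)

lemma comm: "ev D (dx (dy e)) p = ev D (dy (dx e)) p"
proof (induction e)
  case (Gx k m n) then show ?case by (rule comm_Gx)
next
  case (Mu e1 e2) then show ?case by (simp add: algebra_simps)
qed simp_all

lemma ev_x_nhds: "open W \<Longrightarrow> (x, y) \<in> W \<Longrightarrow> eventually (\<lambda>t. (t, y) \<in> W) (nhds x)"
proof -
  assume "open W" "(x, y) \<in> W"
  then have "eventually (\<lambda>p. p \<in> W) (nhds (x, y))" by (rule eventually_nhds_in_open)
  moreover have "filterlim (\<lambda>t. (t, y)) (nhds (x, y)) (nhds x)"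
    by (intro tendsto_Pair filterlim_ident tendsto_const)
  ultimately show ?thesis by (rule eventually_compose_filterlim)
qed

definition Om :: "(real \<times> real) set" where "Om = {p. \<not> (fst p = 0 \<and> snd p \<le> 0)}"

context flatctx
begin

lemma ev_dx:
  assumes "(x, y) \<in> U" "(x, y) \<in> Om"
  shows "((\<lambda>t. ev D e (t, y)) has_real_derivative ev D (dx e) (x, y)) (at x)"
proof (induction e)
  case (Hx a b) then show ?case using Dx[OF assms(1)] by simp
next
  case (Gx k m n) then show ?case using Gf_dx[of x y k m n] assms(2) by (simp add: Om_def ev_dx_Gx del: dx.simps)
next
  case (Cx c) then show ?case by simp
next
  case (Ad e1 e2) then show ?case using DERIV_add[OF Ad.IH] by simp
next
  case (Mu e1 e2) then show ?case using DERIV_mult[OF Mu.IH] by (simp add: algebra_simps)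
qed

lemma ev_dy:
  assumes "(x, y) \<in> U"
  shows "((\<lambda>t. ev D e (x, t)) has_real_derivative ev D (dy e) (x, y)) (at y)"
proof (induction e)
  case (Hx a b) then show ?case using Dy[OF assms(1)] by simp
next
  case (Gx k m n) then show ?case using Gf_dy[of k m n x y] by (simp add: ev_dy_Gx del: dy.simps)
next
  case (Cx c) then show ?case by simp
next
  case (Ad e1 e2) then show ?case using DERIV_add[OF Ad.IH] by simp
next
  case (Mu e1 e2) then show ?case using DERIV_mult[OF Mu.IH] by (simp add: algebra_simps)
qed

lemma ev_cont: assumes "p \<in> U" "p \<in> Om" shows "isCont (ev D e) p"
proof (induction e)
  case (Hx a b)
  then show ?case using Dcont U_open assms by (simp add: continuous_on_eq_continuous_at)
next
  case (Gx k m n) then show ?case using Gf_cont assms by (simp add: Om_def)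
next
  case (Cx c) then show ?case by simp
next
  case (Ad e1 e2) then show ?case using isCont_add[OF Ad.IH] by simp
next
  case (Mu e1 e2) then show ?case using isCont_mult[OF Mu.IH] by simp
qed

lemma cong_dx:
  assumes W: "open W" "W \<subseteq> U \<inter> Om" and eq: "\<And>p. p \<in> W \<Longrightarrow> ev D e1 p = ev D e2 p"
    and p: "p \<in> W"
  shows "ev D (dx e1) p = ev D (dx e2) p"
proof -
  obtain x y where xy: "p = (x, y)" by (cases p)
  have xyU: "(x, y) \<in> U" "(x, y) \<in> Om" using W(2) p xy by auto
  have d1: "((\<lambda>t. ev D e1 (t, y)) has_real_derivative ev D (dx e1) (x, y)) (at x)"
    by (rule ev_dx[OF xyU])
  have d2: "((\<lambda>t. ev D e2 (t, y)) has_real_derivative ev D (dx e2) (x, y)) (at x)"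
    by (rule ev_dx[OF xyU])
  have "eventually (\<lambda>t. (t, y) \<in> W) (nhds x)" using ev_x_nhds[OF W(1), of x y] p xy by blast
  then have evq: "eventually (\<lambda>t. ev D e1 (t, y) = ev D e2 (t, y)) (nhds x)"
    by (rule eventually_mono) (rule eq)
  have d1': "((\<lambda>t. ev D e2 (t, y)) has_real_derivative ev D (dx e1) (x, y)) (at x)"
    by (rule DERIV_cong_ev[OF refl evq refl, THEN iffD1, OF d1])
  show ?thesis using DERIV_unique[OF d1' d2] xy by simp
qed

definition EE :: "nat \<Rightarrow> nat \<Rightarrow> ex" where
  "EE i j = (dx ^^ i) ((dy ^^ j) (Mu (Hx 0 0) (Gx 0 0 0)))"

lemma EE_x: "EE (Suc i) j = dx (EE i j)"
  by (simp add: EE_def)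

lemma hasH_EE: "hasH (EE i j)"
proof -
  have "hasH ((dy ^^ j) (Mu (Hx 0 0) (Gx 0 0 0)))"
    by (induction j) (auto intro: hasH_dy)
  then show ?thesis unfolding EE_def by (induction i) (auto intro: hasH_dx)
qed

lemma EE_y:
  assumes W: "open W" "W \<subseteq> U \<inter> Om"
  shows "p \<in> W \<Longrightarrow> ev D (dy (EE i j)) p = ev D (EE i (Suc j)) p"
proof (induction i arbitrary: p)
  case 0 then show ?case by (simp add: EE_def)
next
  case (Suc i)
  have "ev D (dy (EE (Suc i) j)) p = ev D (dx (dy (EE i j))) p"
    by (simp add: EE_x comm)
  also have "\<dots> = ev D (dx (EE i (Suc j))) p"
    by (rule cong_dx[OF W Suc.IH Suc.prems])
  also have "\<dots> = ev D (EE (Suc i) (Suc j)) p" by (simp add: EE_x)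
  finally show ?case .
qed

end


lemma Gf_bound:
  "\<exists>C\<ge>0. \<forall>q. \<bar>fst q\<bar> \<le> 1/2 \<and> \<bar>snd q\<bar> \<le> 1/2 \<longrightarrow> \<bar>Gf k m n q\<bar> * dd q ^ n \<le> C"
proof -
  obtain M where M: "\<And>t. \<bar>Bd k t\<bar> \<le> M" using Bd_bound by blast
  have M0: "M \<ge> 0" using M[of 0] by linarith
  have dd1: "dd q \<le> 1" "dd q \<ge> 0" if "\<bar>fst q\<bar> \<le> 1/2 \<and> \<bar>snd q\<bar> \<le> 1/2" for q :: "real \<times> real"
    using that by (auto simp: dd_def)
  have ym: "\<bar>snd q\<bar> ^ m \<le> 1" if "\<bar>fst q\<bar> \<le> 1/2 \<and> \<bar>snd q\<bar> \<le> 1/2" for q :: "real \<times> real"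
    using that by (intro power_le_one) auto
  show ?thesis
  proof (cases k)
    case 0
    have "\<bar>Gf k m n q\<bar> * dd q ^ n \<le> max M 1" if q: "\<bar>fst q\<bar> \<le> 1/2 \<and> \<bar>snd q\<bar> \<le> 1/2" for q
    proof -
      have a: "\<bar>if fst q < 0 then Bd 0 (snd q / - fst q) else 1\<bar> \<le> max M 1"
        using M[of "snd q / - fst q"] 0 by auto
      have "\<bar>Gf k m n q\<bar> = \<bar>if fst q < 0 then Bd 0 (snd q / - fst q) else 1\<bar> * \<bar>snd q\<bar> ^ m"
        using 0 by (simp add: abs_mult power_abs)
      also have "\<dots> \<le> max M 1 * 1" using a ym[OF q] by (intro mult_mono) auto
      finally have "\<bar>Gf k m n q\<bar> \<le> max M 1" by simp
      moreover have "dd q ^ n \<le> 1" using dd1[OF q] by (intro power_le_one) auto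
      ultimately have "\<bar>Gf k m n q\<bar> * dd q ^ n \<le> max M 1 * 1"
        using dd_nonneg[of q] by (intro mult_mono) auto
      then show ?thesis by simp
    qed
    then show ?thesis by (intro exI[of _ "max M 1"]) auto
  next
    case (Suc k')
    have "\<bar>Gf k m n q\<bar> * dd q ^ n \<le> M * 3 ^ n" if q: "\<bar>fst q\<bar> \<le> 1/2 \<and> \<bar>snd q\<bar> \<le> 1/2" for q
    proof -
      obtain x y where xy: "q = (x, y)" by (cases q)
      show ?thesis
      proof (cases "x < 0")
        case False
        then show ?thesis using Suc xy M0 by simp
      next
        case True
        define s where "s = - x"
        have s0: "s > 0" using True s_def by simp
        show ?thesis
        proof (cases "y / s < 1/2 \<or> y / s > 2")
          case True
          then have "Bd k (y / s) = 0" using Suc by (auto simp: Bd_low Bd_high)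
          then show ?thesis using Suc xy M0 \<open>x < 0\<close> s_def by simp
        next
          case False
          then have f1: "1/2 \<le> y / s" "y / s \<le> 2" by auto
          have y1: "s / 2 \<le> y" using f1(1) s0 by (simp add: le_divide_eq)
          have y2: "y \<le> 2 * s" using f1(2) s0 by (simp add: divide_le_eq)
          have dde: "dd q = s + y" using xy s_def y1 s0 by (simp add: dd_def)
          have r1: "dd q / s \<le> 3" using dde y2 s0 by (simp add: divide_le_eq)
          have r2: "dd q / s \<ge> 0" using dd_nonneg s0 by simp
          have g: "Gf k m n q = Bd k (y / s) * y ^ m * (1 / s) ^ n"
            using Suc xy \<open>x < 0\<close> s_def by simp
          have "\<bar>Gf k m n q\<bar> * dd q ^ n = \<bar>Bd k (y / s)\<bar> * \<bar>y\<bar> ^ m * ((1 / s) ^ n * dd q ^ n)"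
            unfolding g using s0 by (simp add: abs_mult power_abs)
          also have "(1 / s) ^ n * dd q ^ n = (dd q / s) ^ n"
            by (simp add: power_mult_distrib[symmetric])
          also have "\<bar>Bd k (y / s)\<bar> * \<bar>y\<bar> ^ m * (dd q / s) ^ n \<le> M * 1 * 3 ^ n"
            using M[of "y / s"] ym[OF q] r1 r2 xy M0
            by (intro mult_mono power_mono) auto
          finally show ?thesis by simp
        qed
      qed
    qed
    then show ?thesis using M0 by (intro exI[of _ "M * 3 ^ n"]) auto
  qed
qed

locale flatbox = flatctx +
  fixes r :: real
  assumes r_pos: "0 < r" and r_le: "r \<le> 1/2" and KU: "{-r..r} \<times> {-r..r} \<subseteq> U"
begin

abbreviation "Ks \<equiv> {-r..r} \<times> {-r..r}"

lemma Ks_half: "q \<in> Ks \<Longrightarrow> \<bar>fst q\<bar> \<le> 1/2 \<and> \<bar>snd q\<bar> \<le> 1/2"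
  using r_le by auto

lemma dd_le1: "q \<in> Ks \<Longrightarrow> dd q \<le> 1"
  using r_le by (auto simp: dd_def)

lemma ddK_le1: "q \<in> Ks \<Longrightarrow> dd q ^ K \<le> 1"
  using dd_le1 dd_nonneg by (intro power_le_one) auto

lemma ev_poly: "\<exists>C\<ge>0. \<exists>K. \<forall>q\<in>Ks. \<bar>ev D e q\<bar> * dd q ^ K \<le> C"
proof (induction e)
  case (Hx a b)
  obtain C where "C \<ge> 0" "\<forall>q\<in>Ks. \<bar>D a b q\<bar> \<le> C * dd q ^ 0"
    using flat[OF KU, of a b 0] by blast
  then show ?case by (intro exI[of _ C] conjI exI[of _ 0]) auto
next
  case (Gx k m n)
  obtain C where "C \<ge> 0" "\<forall>q. \<bar>fst q\<bar> \<le> 1/2 \<and> \<bar>snd q\<bar> \<le> 1/2 \<longrightarrow> \<bar>Gf k m n q\<bar> * dd q ^ n \<le> C"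
    using Gf_bound by blast
  then show ?case using Ks_half by (intro exI[of _ C] conjI exI[of _ n]) auto
next
  case (Cx c)
  then show ?case by (intro exI[of _ "\<bar>c\<bar>"] conjI exI[of _ 0]) auto
next
  case (Ad e1 e2)
  obtain C1 K1 where C1: "C1 \<ge> 0" "\<forall>q\<in>Ks. \<bar>ev D e1 q\<bar> * dd q ^ K1 \<le> C1" using Ad.IH(1) by blast
  obtain C2 K2 where C2: "C2 \<ge> 0" "\<forall>q\<in>Ks. \<bar>ev D e2 q\<bar> * dd q ^ K2 \<le> C2" using Ad.IH(2) by blast
  have "\<bar>ev D (Ad e1 e2) q\<bar> * dd q ^ (K1 + K2) \<le> C1 + C2" if q: "q \<in> Ks" for q
  proof -
    have p1: "0 \<le> dd q ^ K1" "0 \<le> dd q ^ K2" using dd_nonneg by auto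
    have "\<bar>ev D (Ad e1 e2) q\<bar> * dd q ^ (K1 + K2)
        \<le> (\<bar>ev D e1 q\<bar> + \<bar>ev D e2 q\<bar>) * (dd q ^ K1 * dd q ^ K2)"
      unfolding power_add by (rule mult_right_mono) (use p1 in \<open>auto simp: abs_triangle_ineq\<close>)
    also have "\<dots> = (\<bar>ev D e1 q\<bar> * dd q ^ K1) * dd q ^ K2 + (\<bar>ev D e2 q\<bar> * dd q ^ K2) * dd q ^ K1"
      by (simp add: algebra_simps)
    also have "\<dots> \<le> C1 * 1 + C2 * 1"
      using C1 C2 q p1 ddK_le1[OF q, of K1] ddK_le1[OF q, of K2]
      by (intro add_mono mult_mono) auto
    finally show ?thesis by simp
  qed
  then show ?case using C1 C2 by (intro exI[of _ "C1 + C2"] conjI exI[of _ "K1 + K2"]) auto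
next
  case (Mu e1 e2)
  obtain C1 K1 where C1: "C1 \<ge> 0" "\<forall>q\<in>Ks. \<bar>ev D e1 q\<bar> * dd q ^ K1 \<le> C1" using Mu.IH(1) by blast
  obtain C2 K2 where C2: "C2 \<ge> 0" "\<forall>q\<in>Ks. \<bar>ev D e2 q\<bar> * dd q ^ K2 \<le> C2" using Mu.IH(2) by blast
  have "\<bar>ev D (Mu e1 e2) q\<bar> * dd q ^ (K1 + K2) \<le> C1 * C2" if q: "q \<in> Ks" for q
  proof -
    have "\<bar>ev D (Mu e1 e2) q\<bar> * dd q ^ (K1 + K2) = (\<bar>ev D e1 q\<bar> * dd q ^ K1) * (\<bar>ev D e2 q\<bar> * dd q ^ K2)"
      by (simp add: power_add abs_mult algebra_simps)
    also have "\<dots> \<le> C1 * C2" using C1 C2 q dd_nonneg by (intro mult_mono) auto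
    finally show ?thesis .
  qed
  then show ?case using C1 C2 by (intro exI[of _ "C1 * C2"] conjI exI[of _ "K1 + K2"]) auto
qed

lemma ev_flat: "hasH e \<Longrightarrow> \<exists>C\<ge>0. \<forall>q\<in>Ks. \<bar>ev D e q\<bar> \<le> C * dd q ^ N"
proof (induction e arbitrary: N)
  case (Hx a b)
  then show ?case using flat[OF KU, of a b N] by simp
next
  case (Ad e1 e2)
  obtain C1 where C1: "C1 \<ge> 0" "\<forall>q\<in>Ks. \<bar>ev D e1 q\<bar> \<le> C1 * dd q ^ N" using Ad.IH(1)[of N] Ad.prems by auto
  obtain C2 where C2: "C2 \<ge> 0" "\<forall>q\<in>Ks. \<bar>ev D e2 q\<bar> \<le> C2 * dd q ^ N" using Ad.IH(2)[of N] Ad.prems by auto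
  have "\<bar>ev D (Ad e1 e2) q\<bar> \<le> (C1 + C2) * dd q ^ N" if "q \<in> Ks" for q
  proof -
    have "\<bar>ev D (Ad e1 e2) q\<bar> \<le> \<bar>ev D e1 q\<bar> + \<bar>ev D e2 q\<bar>" by (simp add: abs_triangle_ineq)
    also have "\<dots> \<le> C1 * dd q ^ N + C2 * dd q ^ N" using C1 C2 that by (intro add_mono) auto
    finally show ?thesis by (simp add: algebra_simps)
  qed
  then show ?case using C1 C2 by (intro exI[of _ "C1 + C2"]) auto
next
  case (Mu e1 e2)
  have key: "\<exists>C\<ge>0. \<forall>q\<in>Ks. \<bar>ev D a q * ev D b q\<bar> \<le> C * dd q ^ N"
    if fa: "\<And>N. \<exists>C\<ge>0. \<forall>q\<in>Ks. \<bar>ev D a q\<bar> \<le> C * dd q ^ N" for a b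
  proof -
    obtain C2 K2 where C2: "C2 \<ge> 0" "\<forall>q\<in>Ks. \<bar>ev D b q\<bar> * dd q ^ K2 \<le> C2" using ev_poly by blast
    obtain C1 where C1: "C1 \<ge> 0" "\<forall>q\<in>Ks. \<bar>ev D a q\<bar> \<le> C1 * dd q ^ (N + K2)" using fa by blast
    have "\<bar>ev D a q * ev D b q\<bar> \<le> (C1 * C2) * dd q ^ N" if q: "q \<in> Ks" for q
    proof -
      have "\<bar>ev D a q * ev D b q\<bar> = \<bar>ev D a q\<bar> * \<bar>ev D b q\<bar>" by (simp add: abs_mult)
      also have "\<dots> \<le> (C1 * dd q ^ (N + K2)) * \<bar>ev D b q\<bar>"
        using C1 q by (intro mult_right_mono) auto
      also have "\<dots> = (C1 * dd q ^ N) * (\<bar>ev D b q\<bar> * dd q ^ K2)"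
        by (simp add: power_add algebra_simps)
      also have "\<dots> \<le> (C1 * dd q ^ N) * C2"
        using C1 C2 q dd_nonneg by (intro mult_left_mono) auto
      finally show ?thesis by (simp add: algebra_simps)
    qed
    then show ?thesis using C1 C2 by (intro exI[of _ "C1 * C2"]) auto
  qed
  show ?case
  proof (cases "hasH e1")
    case True
    then show ?thesis using key[of e1 e2] Mu.IH(1) by simp
  next
    case False
    then have "hasH e2" using Mu.prems by simp
    then show ?thesis using key[of e2 e1] Mu.IH(2) by (simp add: mult.commute)
  qed
qed simp_all

end


lemma ev_y_nhds: "open W \<Longrightarrow> (x, y) \<in> W \<Longrightarrow> eventually (\<lambda>t. (x, t) \<in> W) (nhds y)"
proof -
  assume "open W" "(x, y) \<in> W"
  then have "eventually (\<lambda>p. p \<in> W) (nhds (x, y))" by (rule eventually_nhds_in_open)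
  moreover have "filterlim (\<lambda>t. (x, t)) (nhds (x, y)) (nhds y)"
    by (intro tendsto_Pair filterlim_ident tendsto_const)
  ultimately show ?thesis by (rule eventually_compose_filterlim)
qed

lemma deriv0_bound:
  fixes g :: "real \<Rightarrow> real"
  assumes g0: "g a = 0" and ev: "eventually (\<lambda>t. \<bar>g t\<bar> \<le> C * (t - a)^2) (nhds a)"
  shows "(g has_real_derivative 0) (at a)"
proof -
  have "((\<lambda>h. a + h) \<longlongrightarrow> a + 0) (at (0::real))"
    by (intro tendsto_intros)
  then have lim: "filterlim (\<lambda>h. a + h) (nhds a) (at 0)" by simp
  have ev2: "eventually (\<lambda>h. \<bar>g (a + h)\<bar> \<le> C * h^2) (at 0)"
    using eventually_compose_filterlim[OF ev lim] by simp
  have "eventually (\<lambda>h. norm ((g (a + h) - g a) / h) \<le> \<bar>C\<bar> * \<bar>h\<bar>) (at 0)"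
  proof (rule eventually_mono[OF eventually_conj[OF ev2 eventually_neq_at_within[of 0 0 UNIV]]])
    fix h :: real assume h: "\<bar>g (a + h)\<bar> \<le> C * h^2 \<and> h \<noteq> 0"
    then have "\<bar>g (a + h)\<bar> / \<bar>h\<bar> \<le> C * h^2 / \<bar>h\<bar>" by (intro divide_right_mono) auto
    also have "C * h^2 / \<bar>h\<bar> = C * \<bar>h\<bar>"
    proof -
      have e1: "C * h^2 / \<bar>h\<bar> = (C * \<bar>h\<bar>) * \<bar>h\<bar> / \<bar>h\<bar>" by (simp add: power2_eq_square mult.assoc)
      have e2: "(C * \<bar>h\<bar>) * \<bar>h\<bar> / \<bar>h\<bar> = C * \<bar>h\<bar>" using h by (intro nonzero_mult_div_cancel_right) simp
      show ?thesis by (rule trans[OF e1 e2])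
    qed
    also have "\<dots> \<le> \<bar>C\<bar> * \<bar>h\<bar>" by (intro mult_right_mono) auto
    finally show "norm ((g (a + h) - g a) / h) \<le> \<bar>C\<bar> * \<bar>h\<bar>" using g0 by (simp add: abs_divide)
  qed
  moreover have "((\<lambda>h. \<bar>C\<bar> * \<bar>h\<bar>) \<longlongrightarrow> \<bar>C\<bar> * \<bar>0\<bar>) (at (0::real))"
    by (intro tendsto_intros)
  moreover have "\<bar>C\<bar> * \<bar>0::real\<bar> = 0" by simp
  ultimately have "((\<lambda>h. (g (a + h) - g a) / h) \<longlongrightarrow> 0) (at 0)"
    by (metis Lim_null_comparison)
  then show ?thesis by (simp add: DERIV_def)
qed

lemma open_Om: "open Om"
proof -
  have "Om = {p. fst p < 0} \<union> {p. 0 < fst p} \<union> {p :: real \<times> real. 0 < snd p}"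
    by (auto simp: Om_def)
  also have "open \<dots>" by (intro open_Un open_Collect_less continuous_intros)
  finally show ?thesis .
qed

lemma dd_cont: "isCont dd p"
  unfolding dd_def[abs_def] by (intro continuous_intros)

context flatbox
begin

definition "Vb = {-r<..<r} \<times> {-r<..<r}"
definition "hh q = h q * Gf 0 0 0 q"
definition "DD i j q = (if q \<in> Om then ev D (EE i j) q else 0)"

lemma Vb_open: "open Vb" unfolding Vb_def by (intro open_Times open_greaterThanLessThan)
lemma Vb_Ks: "Vb \<subseteq> Ks" unfolding Vb_def by auto
lemma Vb_U: "Vb \<subseteq> U" using Vb_Ks KU by blast

lemma DD_flat: "\<exists>C\<ge>0. \<forall>q\<in>Ks. \<bar>DD i j q\<bar> \<le> C * dd q ^ N"
proof -
  obtain C where C: "C \<ge> 0" "\<forall>q\<in>Ks. \<bar>ev D (EE i j) q\<bar> \<le> C * dd q ^ N"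
    using ev_flat[OF hasH_EE] by blast
  have "\<bar>DD i j q\<bar> \<le> C * dd q ^ N" if "q \<in> Ks" for q
    using C that dd_nonneg[of q] by (auto simp: DD_def)
  then show ?thesis using C by blast
qed

lemma notOm: "q \<notin> Om \<Longrightarrow> fst q = 0 \<and> snd q \<le> 0" by (auto simp: Om_def)

lemma DD_cont: "continuous_on Vb (DD i j)"
proof -
  have "isCont (DD i j) p" if p: "p \<in> Vb" for p
  proof (cases "p \<in> Om")
    case True
    show ?thesis
    proof (rule isCont_local[of "Vb \<inter> Om"])
      show "open (Vb \<inter> Om)" by (intro open_Int Vb_open open_Om)
      show "isCont (ev D (EE i j)) p" using True p Vb_U by (intro ev_cont) auto
      show "p \<in> Vb \<inter> Om" using p True by simp
      fix q assume "q \<in> Vb \<inter> Om"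
      then show "DD i j q = ev D (EE i j) q" by (simp add: DD_def)
    qed
  next
    case False
    obtain C where C: "C \<ge> 0" "\<forall>q\<in>Ks. \<bar>DD i j q\<bar> \<le> C * dd q ^ 1" using DD_flat by blast
    have dp: "dd p = 0" using notOm[OF False] by (simp add: dd_def)
    have "eventually (\<lambda>q. q \<in> Vb) (at p)" by (rule eventually_at_in_open'[OF Vb_open p])
    then have ev1: "eventually (\<lambda>q. norm (DD i j q) \<le> C * dd q) (at p)"
    proof (rule eventually_mono)
      fix q assume "q \<in> Vb"
      then have "q \<in> Ks" using Vb_Ks by blast
      then have "\<bar>DD i j q\<bar> \<le> C * dd q ^ 1" using C(2) by blast
      then show "norm (DD i j q) \<le> C * dd q" by simp
    qed
    have "((\<lambda>q. C * dd q) \<longlongrightarrow> C * dd p) (at p)"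
      using dd_cont[of p] unfolding isCont_def by (intro tendsto_mult tendsto_const)
    then have ev2: "((\<lambda>q. C * dd q) \<longlongrightarrow> 0) (at p)" using dp by simp
    have "(DD i j \<longlongrightarrow> 0) (at p)" by (rule Lim_null_comparison[OF ev1 ev2])
    moreover have "DD i j p = 0" using False by (simp add: DD_def)
    ultimately show ?thesis by (simp add: isCont_def)
  qed
  then show ?thesis by (intro continuous_at_imp_continuous_on) auto
qed

lemma DD_dx:
  assumes "(x, y) \<in> Vb"
  shows "((\<lambda>t. DD i j (t, y)) has_real_derivative DD (Suc i) j (x, y)) (at x)"
proof (cases "(x, y) \<in> Om")
  case True
  have d: "((\<lambda>t. ev D (EE i j) (t, y)) has_real_derivative ev D (EE (Suc i) j) (x, y)) (at x)"
    unfolding EE_x using assms True Vb_U by (intro ev_dx) auto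
  have evq: "eventually (\<lambda>t. ev D (EE i j) (t, y) = DD i j (t, y)) (nhds x)"
    using ev_x_nhds[OF open_Om True] by (rule eventually_mono) (simp add: DD_def)
  show ?thesis using DERIV_cong_ev[OF refl evq refl, THEN iffD1, OF d] True by (simp add: DD_def)
next
  case False
  then have xy: "x = 0" "y \<le> 0" using notOm by auto
  obtain C where C: "C \<ge> 0" "\<forall>q\<in>Ks. \<bar>DD i j q\<bar> \<le> C * dd q ^ 2" using DD_flat by blast
  have "((\<lambda>t. DD i j (t, y)) has_real_derivative 0) (at x)"
  proof (rule deriv0_bound)
    show "DD i j (x, y) = 0" using False by (simp add: DD_def)
    have "eventually (\<lambda>t. (t, y) \<in> Vb) (nhds x)" by (rule ev_x_nhds[OF Vb_open assms])
    then show "eventually (\<lambda>t. \<bar>DD i j (t, y)\<bar> \<le> C * (t - x)^2) (nhds x)"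
    proof (rule eventually_mono)
      fix t assume t: "(t, y) \<in> Vb"
      have "dd (t, y) \<le> \<bar>t - x\<bar>" using xy by (auto simp: dd_def)
      then have "dd (t, y) ^ 2 \<le> (t - x)^2"
        by (metis abs_le_square_iff abs_of_nonneg dd_nonneg)
      then show "\<bar>DD i j (t, y)\<bar> \<le> C * (t - x)^2"
        using C t Vb_Ks by (meson mult_left_mono order_trans subsetD)
    qed
  qed
  then show ?thesis using False by (simp add: DD_def)
qed

lemma DD_dy:
  assumes "(x, y) \<in> Vb"
  shows "((\<lambda>t. DD i j (x, t)) has_real_derivative DD i (Suc j) (x, y)) (at y)"
proof (cases "(x, y) \<in> Om")
  case True
  have W: "open (Vb \<inter> Om)" "Vb \<inter> Om \<subseteq> U \<inter> Om" using Vb_open open_Om Vb_U by auto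
  have d: "((\<lambda>t. ev D (EE i j) (x, t)) has_real_derivative ev D (EE i (Suc j)) (x, y)) (at y)"
    using ev_dy[of x y "EE i j"] EE_y[OF W, of "(x, y)" i j] assms True Vb_U by auto
  have evq: "eventually (\<lambda>t. ev D (EE i j) (x, t) = DD i j (x, t)) (nhds y)"
    using ev_y_nhds[OF open_Om True] by (rule eventually_mono) (simp add: DD_def)
  show ?thesis using DERIV_cong_ev[OF refl evq refl, THEN iffD1, OF d] True by (simp add: DD_def)
next
  case False
  then have xy: "x = 0" "y \<le> 0" using notOm by auto
  obtain C where C: "C \<ge> 0" "\<forall>q\<in>Ks. \<bar>DD i j q\<bar> \<le> C * dd q ^ 2" using DD_flat by blast
  have "((\<lambda>t. DD i j (x, t)) has_real_derivative 0) (at y)"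
  proof (rule deriv0_bound)
    show "DD i j (x, y) = 0" using False by (simp add: DD_def)
    have "eventually (\<lambda>t. (x, t) \<in> Vb) (nhds y)" by (rule ev_y_nhds[OF Vb_open assms])
    then show "eventually (\<lambda>t. \<bar>DD i j (x, t)\<bar> \<le> C * (t - y)^2) (nhds y)"
    proof (rule eventually_mono)
      fix t assume t: "(x, t) \<in> Vb"
      have "dd (x, t) \<le> \<bar>t - y\<bar>" using xy by (auto simp: dd_def)
      then have "dd (x, t) ^ 2 \<le> (t - y)^2"
        by (metis abs_le_square_iff abs_of_nonneg dd_nonneg)
      then show "\<bar>DD i j (x, t)\<bar> \<le> C * (t - y)^2"
        using C t Vb_Ks by (meson mult_left_mono order_trans subsetD)
    qed
  qed
  then show ?thesis using False by (simp add: DD_def)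
qed

lemma main_box:
  assumes h0: "h (0, 0) = 0"
  shows "\<exists>V h'. open V \<and> (0, 0) \<in> V \<and> V \<subseteq> U \<and> smooth_on V h' \<and> h' (0, 0) = 0 \<and>
           (\<forall>x y. (x, y) \<in> V \<longrightarrow> x \<ge> 0 \<longrightarrow> h' (x, y) = h (x, y)) \<and>
           (\<forall>x y. (x, y) \<in> V \<longrightarrow> y \<le> 0 \<longrightarrow> h' (x, y) = 0)"
proof (intro exI[of _ Vb] exI[of _ hh] conjI)
  show "open Vb" by (rule Vb_open)
  show "(0, 0) \<in> Vb" using r_pos by (simp add: Vb_def)
  show "Vb \<subseteq> U" by (rule Vb_U)
  show "hh (0, 0) = 0" by (simp add: hh_def h0)
  show "\<forall>x y. (x, y) \<in> Vb \<longrightarrow> 0 \<le> x \<longrightarrow> hh (x, y) = h (x, y)"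
    by (auto simp: hh_def)
  show "\<forall>x y. (x, y) \<in> Vb \<longrightarrow> y \<le> 0 \<longrightarrow> hh (x, y) = 0"
  proof (intro allI impI)
    fix x y assume xy: "(x, y) \<in> Vb" "y \<le> 0"
    show "hh (x, y) = 0"
    proof (cases "x < 0")
      case True
      have "y / - x \<le> 0" using True xy(2) by (intro divide_nonpos_pos) auto
      then have "y / - x < 1/2" by linarith
      then show ?thesis using True by (simp add: hh_def Bd_low)
    next
      case False
      then show ?thesis using hQ xy Vb_U by (auto simp: hh_def)
    qed
  qed
  show "smooth_on Vb hh" unfolding smooth_on_def
  proof (intro exI[of _ DD] conjI allI impI ballI)
    fix p assume p: "p \<in> Vb"
    show "DD 0 0 p = hh p"
    proof (cases "p \<in> Om")
      case True
      then show ?thesis using D00 p Vb_U by (auto simp: DD_def EE_def hh_def)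
    next
      case False
      then have "fst p = 0" "snd p \<le> 0" using notOm by auto
      then have "h p = 0" using hQ p Vb_U by (cases p) auto
      then show ?thesis using False by (simp add: DD_def hh_def)
    qed
  next
    fix i j show "continuous_on Vb (DD i j)" by (rule DD_cont)
  next
    fix i j x y assume "(x, y) \<in> Vb"
    then show "((\<lambda>t. DD i j (t, y)) has_real_derivative DD (Suc i) j (x, y)) (at x)"
      "((\<lambda>t. DD i j (x, t)) has_real_derivative DD i (Suc j) (x, y)) (at y)"
      by (rule DD_dx, rule DD_dy)
  qed
qed

end


theorem lemma4p8:
  fixes h :: "real \<times> real \<Rightarrow> real" and U :: "(real \<times> real) set"
  assumes "open U" and "(0, 0) \<in> U"
    and "smooth_on U h" and "h (0, 0) = 0"
    and "\<forall>x y. (x, y) \<in> U \<longrightarrow> x \<ge> 0 \<longrightarrow> y \<le> 0 \<longrightarrow> h (x, y) = 0"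
  shows "\<exists>V h'. open V \<and> (0, 0) \<in> V \<and> V \<subseteq> U \<and> smooth_on V h' \<and> h' (0, 0) = 0 \<and>
           (\<forall>x y. (x, y) \<in> V \<longrightarrow> x \<ge> 0 \<longrightarrow> h' (x, y) = h (x, y)) \<and>
           (\<forall>x y. (x, y) \<in> V \<longrightarrow> y \<le> 0 \<longrightarrow> h' (x, y) = 0)"
proof -
  obtain D where D: "\<forall>p\<in>U. D 0 0 p = h p" "\<forall>i j. continuous_on U (D i j)"
    "\<forall>i j x y. (x, y) \<in> U \<longrightarrow>
            ((\<lambda>t. D i j (t, y)) has_real_derivative D (Suc i) j (x, y)) (at x) \<and>
            ((\<lambda>t. D i j (x, t)) has_real_derivative D i (Suc j) (x, y)) (at y)"
    using assms(3) unfolding smooth_on_def by blast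
  interpret flatctx U h D
    using assms(1,5) D by unfold_locales auto
  obtain e where e: "e > 0" "ball (0, 0) e \<subseteq> U"
    using assms(1,2) open_contains_ball by blast
  define r where "r = min (e / 3) (1 / 2)"
  have r: "0 < r" "r \<le> 1/2" "r \<le> e / 3" using e by (auto simp: r_def)
  have KU: "{-r..r} \<times> {-r..r} \<subseteq> U"
  proof
    fix q assume q: "q \<in> {-r..r} \<times> {-r..r}"
    obtain x y where xy: "q = (x, y)" by (cases q)
    have "norm q = sqrt (x^2 + y^2)" using xy by (simp add: norm_Pair)
    also have "\<dots> \<le> \<bar>x\<bar> + \<bar>y\<bar>" by (rule sqrt_sum_squares_le_sum_abs)
    also have "\<dots> < e" using q xy r e by auto
    finally have "norm q < e" .
    then have "q \<in> ball (0, 0) e" by (simp add: zero_prod_def[symmetric] dist_0_norm)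
    then show "q \<in> U" using e by blast
  qed
  interpret flatbox U h D r
    using r KU by unfold_locales auto
  show ?thesis by (rule main_box[OF assms(4)])
qed

end
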